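(* In the continuous-time single-buyer game with known total value $V=1$, every truthful direct-revelation mechanism satisfies $\inf_v X_v\le 1/e$, where the infimum is over all buyer types $v$ and $X_v=\int_0^1x_v(t)\,dt$ is the revenue obtained from type $v$.
   Context: Continuous-time single-buyer game: a buyer type is a Lipschitz-continuous $v:[0,1]\to[0,\infty)$ with $\int_0^1 v(t)\,dt=V$ ($V$ known to the seller). A direct-revelation mechanism assigns to each type $v$ a continuous rate function $r_v:[0,1]\to[0,1]$ and a continuous payment function $x_v:[0,1]\to[0,\infty)$. It is truthful if (i) $r_v(t)v(t)-x_v(t)\ge0$ for all types $v$ and all $t\in[0,1]$, and (ii) for all types $v,v'$ and $\tau\in[0,1]$ such that $r_{v'}(t)v(t)-x_{v'}(t)\ge0$ for all $0\le t\le\tau$, we have $\int_0^1(r_v(t)v(t)-x_v(t))\,dt\ge\int_0^\tau(r_{v'}(t)v(t)-x_{v'}(t))\,dt$. *)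

theory Defs
  imports "HOL-Analysis.Analysis"
begin

definition buyer_type :: "real \<Rightarrow> (real \<Rightarrow> real) \<Rightarrow> bool" where
  "buyer_type V v \<longleftrightarrow>
     (\<exists>L. L-lipschitz_on {0..1} v) \<and>
     (\<forall>t\<in>{0..1}. 0 \<le> v t) \<and>
     integral {0..1} v = V"

definition mechanism :: "real \<Rightarrow> ((real \<Rightarrow> real) \<Rightarrow> real \<Rightarrow> real)
    \<Rightarrow> ((real \<Rightarrow> real) \<Rightarrow> real \<Rightarrow> real) \<Rightarrow> bool" where
  "mechanism V r x \<longleftrightarrow>
     (\<forall>v. buyer_type V v \<longrightarrow>
        continuous_on {0..1} (r v) \<and> (\<forall>t\<in>{0..1}. 0 \<le> r v t \<and> r v t \<le> 1) \<and>
        continuous_on {0..1} (x v) \<and> (\<forall>t\<in>{0..1}. 0 \<le> x v t))"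

definition truthful :: "real \<Rightarrow> ((real \<Rightarrow> real) \<Rightarrow> real \<Rightarrow> real)
    \<Rightarrow> ((real \<Rightarrow> real) \<Rightarrow> real \<Rightarrow> real) \<Rightarrow> bool" where
  "truthful V r x \<longleftrightarrow>
     (\<forall>v. buyer_type V v \<longrightarrow> (\<forall>t\<in>{0..1}. r v t * v t - x v t \<ge> 0)) \<and>
     (\<forall>v v' \<tau>. buyer_type V v \<longrightarrow> buyer_type V v' \<longrightarrow> \<tau> \<in> {0..1} \<longrightarrow>
        (\<forall>t\<in>{0..\<tau>}. r v' t * v t - x v' t \<ge> 0) \<longrightarrow>
        integral {0..1} (\<lambda>t. r v t * v t - x v t)
          \<ge> integral {0..\<tau>} (\<lambda>t. r v' t * v t - x v' t))"

definition revenue :: "((real \<Rightarrow> real) \<Rightarrow> real \<Rightarrow> real) \<Rightarrow> (real \<Rightarrow> real) \<Rightarrow> real" where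
  "revenue x v = integral {0..1} (x v)"

end

theory Submission imports Defs begin

lemma bt_facts:
  assumes "buyer_type V v"
  shows "continuous_on {0..1} v" "\<forall>t\<in>{0..1}. 0 \<le> v t" "integral {0..1} v = V"
  using assms unfolding buyer_type_def by (auto intro: lipschitz_on_continuous_on)

lemma lnb: assumes "0 < (K::real)" shows "K * ln (1/K) \<le> exp (-1)"
proof -
  have p: "0 < 1 / (K * exp 1)" using assms by simp
  have "ln (1 / (K * exp 1)) \<le> 1 / (K * exp 1) - 1" using ln_le_minus_one[OF p] .
  moreover have "ln (1 / (K * exp 1)) = ln (1/K) - 1"
    using assms by (simp add: ln_div ln_mult)
  ultimately have "ln (1/K) \<le> 1 / (K * exp 1)" by simp
  hence "K * ln (1/K) \<le> K * (1 / (K * exp 1))" using assms by (intro mult_left_mono) auto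
  also have "\<dots> = exp (-1)" using assms by (simp add: exp_minus field_simps)
  finally show ?thesis .
qed

lemma alloc_bound:
  fixes v r :: "real \<Rightarrow> real" and K :: real
  assumes cv: "continuous_on {0..1} v" and v0: "\<forall>t\<in>{0..1}. 0 \<le> v t" and v1: "integral {0..1} v = 1"
    and cr: "continuous_on {0..1} r" and r01: "\<forall>t\<in>{0..1}. 0 \<le> r t \<and> r t \<le> 1"
    and K: "0 < K" "K \<le> 1"
    and P: "\<forall>t\<in>{0..1}. r t * (1 - integral {0..t} v) \<le> K"
  shows "integral {0..1} (\<lambda>t. r t * v t) \<le> K * ln (1/K) + K"
proof -
  define F where "F t = integral {0..t} v" for t
  have intsub: "v integrable_on {a..b}" if "0 \<le> a" "b \<le> 1" for a b
    by (intro integrable_continuous_real continuous_on_subset[OF cv]) (use that in auto)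
  have crv: "continuous_on {0..1} (\<lambda>t. r t * v t)" using continuous_on_mult[OF cr cv] .
  have intrv: "(\<lambda>t. r t * v t) integrable_on {a..b}" if "0 \<le> a" "b \<le> 1" for a b
    by (intro integrable_continuous_real continuous_on_subset[OF crv]) (use that in auto)
  have cF: "continuous_on {0..1} F" unfolding F_def by (rule indefinite_integral_continuous_1[OF intsub]) auto
  have F0: "F 0 = 0" by (simp add: F_def)
  have F1: "F 1 = 1" using v1 by (simp add: F_def)
  obtain t0 where t0: "0 \<le> t0" "t0 \<le> 1" "F t0 = 1 - K"
    using IVT'[of F 0 "1-K" 1] cF F0 F1 K by auto
  have Fmono: "F t \<le> F t0" if "0 \<le> t" "t \<le> t0" for t
    unfolding F_def
    by (rule integral_subset_le) (use that t0 v0 intsub in auto)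
  have split1: "integral {0..1} (\<lambda>t. r t * v t) = integral {0..t0} (\<lambda>t. r t * v t) + integral {t0..1} (\<lambda>t. r t * v t)"
    using Henstock_Kurzweil_Integration.integral_combine[OF t0(1,2) intrv[of 0 1, simplified]] by simp
  have split2: "F t0 + integral {t0..1} v = 1"
    using Henstock_Kurzweil_Integration.integral_combine[OF t0(1,2) intsub[of 0 1, simplified]] v1 by (simp add: F_def)
  have second: "integral {t0..1} (\<lambda>t. r t * v t) \<le> K"
  proof -
    have "integral {t0..1} (\<lambda>t. r t * v t) \<le> integral {t0..1} v"
      apply (rule integral_le[OF intrv intsub])
      using t0 r01 v0 by (auto intro!: mult_left_le_one_le)
    thus ?thesis using split2 t0 by simp
  qed
  have dF: "(F has_real_derivative v t) (at t within {0..t0})" if "t \<in> {0..t0}" for t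
    unfolding F_def
    by (rule integral_has_real_derivative[OF continuous_on_subset[OF cv]]) (use that t0 in auto)
  have Fpos: "K \<le> 1 - F t" if "t \<in> {0..t0}" for t using Fmono[of t] that t0 by auto
  have dG: "((\<lambda>t. - K * ln (1 - F t)) has_real_derivative (K * v t / (1 - F t))) (at t within {0..t0})"
    if "t \<in> {0..t0}" for t
  proof -
    have pos: "0 < 1 - F t" using Fpos[OF that] K by linarith
    show ?thesis
      by (rule derivative_eq_intros dF[OF that] refl | use pos in simp)+
  qed
  have hi: "((\<lambda>t. K * v t / (1 - F t)) has_integral ((- K * ln (1 - F t0)) - (- K * ln (1 - F 0)))) {0..t0}"
    apply (rule fundamental_theorem_of_calculus[OF t0(1)])
    using dG by (simp add: has_real_derivative_iff_has_vector_derivative)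
  have val: "(- K * ln (1 - F t0)) - (- K * ln (1 - F 0)) = K * ln (1/K)"
    using t0 F0 K by (simp add: ln_div)
  have first: "integral {0..t0} (\<lambda>t. r t * v t) \<le> K * ln (1/K)"
  proof -
    have "integral {0..t0} (\<lambda>t. r t * v t) \<le> integral {0..t0} (\<lambda>t. K * v t / (1 - F t))"
    proof (rule integral_le[OF intrv])
      show "(\<lambda>t. K * v t / (1 - F t)) integrable_on {0..t0}" using hi by blast
      fix t assume tt: "t \<in> {0..t0}"
      have pos: "0 < 1 - F t" using Fpos[OF tt] K by linarith
      have "r t * (1 - F t) \<le> K" using P tt t0 by (auto simp: F_def)
      hence "r t \<le> K / (1 - F t)" using pos by (simp add: field_simps)
      moreover have "0 \<le> v t" using v0 tt t0 by auto
      ultimately have "r t * v t \<le> K / (1 - F t) * v t" by (rule mult_right_mono)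
      thus "r t * v t \<le> K * v t / (1 - F t)" by simp
    qed (use t0 in auto)
    also have "\<dots> = K * ln (1/K)" using hi val by (simp add: integral_unique)
    finally show ?thesis .
  qed
  show ?thesis using split1 first second by linarith
qed


lemma lip_mult:
  fixes f g :: "real \<Rightarrow> real"
  assumes "L-lipschitz_on S f" "M-lipschitz_on S g" "\<forall>x\<in>S. \<bar>f x\<bar> \<le> A" "\<forall>x\<in>S. \<bar>g x\<bar> \<le> B"
    and "0 \<le> A" "0 \<le> B"
  shows "(A*M + B*L)-lipschitz_on S (\<lambda>x. f x * g x)"
proof (rule lipschitz_onI)
  show "0 \<le> A*M + B*L" using assms lipschitz_on_nonneg[OF assms(1)] lipschitz_on_nonneg[OF assms(2)] by simp
  fix x y assume xy: "x\<in>S" "y\<in>S"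
  have "f x * g x - f y * g y = f x * (g x - g y) + g y * (f x - f y)" by algebra
  hence "\<bar>f x * g x - f y * g y\<bar> \<le> \<bar>f x\<bar> * \<bar>g x - g y\<bar> + \<bar>g y\<bar> * \<bar>f x - f y\<bar>"
    by (metis abs_mult abs_triangle_ineq)
  also have "\<dots> \<le> A * (M * \<bar>x - y\<bar>) + B * (L * \<bar>x - y\<bar>)"
  proof (rule add_mono; rule mult_mono)
    show "\<bar>g x - g y\<bar> \<le> M * \<bar>x - y\<bar>" using lipschitz_onD[OF assms(2) xy] by (simp add: dist_real_def)
    show "\<bar>f x - f y\<bar> \<le> L * \<bar>x - y\<bar>" using lipschitz_onD[OF assms(1) xy] by (simp add: dist_real_def)
  qed (use assms xy in auto)
  finally show "dist (f x * g x) (f y * g y) \<le> (A*M + B*L) * dist x y"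
    by (simp add: dist_real_def algebra_simps)
qed

lemma arith1: "(q::real) \<le> 1 \<Longrightarrow> 0 \<le> q \<Longrightarrow> r \<le> 1 \<Longrightarrow> 0 \<le> r \<Longrightarrow> 0 < e \<Longrightarrow> r*q - e \<le> (q - e/4)*(r - e/2)"
proof -
  assume a: "(q::real) \<le> 1" "0 \<le> q" "r \<le> 1" "0 \<le> r" "0 < e"
  have "(q - e/4)*(r - e/2) - (r*q - e) = e * (8 - 4*q - 2*r + e) / 8" by (simp add: field_simps)
  moreover have "0 \<le> e * (8 - 4*q - 2*r + e)" using a by (intro mult_nonneg_nonneg) auto
  ultimately show ?thesis by simp
qed

lemma util_nonneg:
  assumes mech: "mechanism 1 r x" and tr: "truthful 1 r x" and w: "buyer_type 1 w"
  shows "0 \<le> integral {0..1} (\<lambda>t. r w t * w t - x w t)"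
proof (rule integral_nonneg)
  have "continuous_on {0..1} (\<lambda>t. r w t * w t - x w t)"
    using mech w bt_facts[OF w] unfolding mechanism_def by (auto intro!: continuous_intros)
  thus "(\<lambda>t. r w t * w t - x w t) integrable_on {0..1}" by (rule integrable_continuous_real)
  show "\<And>t. t \<in> {0..1} \<Longrightarrow> 0 \<le> r w t * w t - x w t" using tr w unfolding truthful_def by auto
qed

lemma deviation:
  assumes mech: "mechanism 1 r x" and tr: "truthful 1 r x" and w: "buyer_type 1 w"
    and s: "0 \<le> s" "s < 1" and e: "0 < e"
  shows "\<exists>v. buyer_type 1 v \<and> r w s * (1 - integral {0..s} w) - e \<le> integral {0..1} (\<lambda>t. r v t * v t - x v t)"
proof -
  note wf = bt_facts[OF w]
  have mw: "continuous_on {0..1} (r w)" "\<forall>t\<in>{0..1}. 0 \<le> r w t \<and> r w t \<le> 1"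
      "continuous_on {0..1} (x w)" "\<forall>t\<in>{0..1}. 0 \<le> x w t"
    using mech w unfolding mechanism_def by auto
  have IR: "\<forall>t\<in>{0..1}. r w t * w t - x w t \<ge> 0" using tr w unfolding truthful_def by auto
  have intw: "w integrable_on {a..b}" if "0 \<le> a" "b \<le> 1" for a b
    by (intro integrable_continuous_real continuous_on_subset[OF wf(1)]) (use that in auto)
  have F0: "0 \<le> integral {0..s} w" by (rule integral_nonneg[OF intw]) (use s wf in auto)
  have F1: "integral {0..s} w \<le> 1"
    using integral_subset_le[of "{0..s}" "{0..1}" w] intw[of 0 s] intw[of 0 1] s wf by auto
  have rs: "0 \<le> r w s" "r w s \<le> 1" using mw s by auto
  show ?thesis
  proof (cases "r w s \<le> e/2")
    case True
    have "r w s * (1 - integral {0..s} w) \<le> r w s" using rs F0 F1 by (intro mult_left_le) auto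
    hence "r w s * (1 - integral {0..s} w) - e \<le> 0" using True e by linarith
    thus ?thesis using util_nonneg[OF mech tr w] w by force
  next
    case False
    obtain L where L: "L-lipschitz_on {0..1} w" using w unfolding buyer_type_def by auto
    obtain B where B: "B > 0" "\<forall>t\<in>{0..1}. \<bar>w t\<bar> \<le> B"
      using compact_imp_bounded[OF compact_continuous_image[OF wf(1)]] unfolding bounded_pos
      by force
    obtain d1 where d1: "d1 > 0" "\<forall>t\<in>{0..1}. dist t s < d1 \<longrightarrow> dist (r w t) (r w s) < e/2"
      using mw(1) s e unfolding continuous_on_iff by (metis atLeastAtMost_iff half_gt_zero less_eq_real_def)
    define \<delta> where "\<delta> = min (d1/2) (min ((1-s)/2) (e/(8*B)))"
    have dpos: "0 < \<delta>" using d1 s e B unfolding \<delta>_def by auto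
    have d2: "s + 2*\<delta> \<le> 1" "\<delta> < d1" "2*B*\<delta> \<le> e/4"
    proof -
      have x: "\<delta> \<le> d1/2" "\<delta> \<le> (1-s)/2" "\<delta> \<le> e/(8*B)" unfolding \<delta>_def by (simp_all only: min.coboundedI1 min.coboundedI2 order_refl)
      show "s + 2*\<delta> \<le> 1" using x(2) by (simp add: field_simps)
      show "\<delta> < d1" using d1 x(1) by (simp add: field_simps)
      show "2*B*\<delta> \<le> e/4" using x(3) B by (simp add: field_simps)
    qed
    define h where "h t = max 0 (\<delta>/2 - \<bar>t - (s + \<delta>/2)\<bar>)" for t
    define lam where "lam t = max 0 (min 1 ((s + 2*\<delta> - t)/\<delta>))" for t
    define M where "M = integral {0..1} (\<lambda>t. w t * lam t)"
    define A where "A = integral {0..1} h"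
    define \<beta> where "\<beta> = (1 - M) / A"
    define v where "v t = w t * lam t + \<beta> * h t" for t
    have ch: "continuous_on {0..1} h" unfolding h_def by (intro continuous_intros)
    have clam: "continuous_on {0..1} lam" unfolding lam_def by (intro continuous_intros) (use dpos in auto)
    have h0: "0 \<le> h t" for t unfolding h_def by simp
    have lam01: "0 \<le> lam t" "lam t \<le> 1" for t unfolding lam_def by auto
    have lam1: "lam t = 1" if "t \<le> s + \<delta>" for t
      using that dpos unfolding lam_def by (auto simp: field_simps)
    have lam0: "lam t = 0" if "t \<ge> s + 2*\<delta>" for t
      using that dpos unfolding lam_def by (auto simp: field_simps)
    have hpos: "s < t \<and> t < s + \<delta>" if "h t \<noteq> 0" for t
      using that unfolding h_def by (auto split: if_splits simp: max_def abs_if)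
    have inth: "h integrable_on {a..b}" if "0 \<le> a" "b \<le> 1" for a b
      by (intro integrable_continuous_real continuous_on_subset[OF ch]) (use that in auto)
    have cwl: "continuous_on {0..1} (\<lambda>t. w t * lam t)" using continuous_on_mult[OF wf(1) clam] .
    have intwl: "(\<lambda>t. w t * lam t) integrable_on {a..b}" if "0 \<le> a" "b \<le> 1" for a b
      by (intro integrable_continuous_real continuous_on_subset[OF cwl]) (use that in auto)
    have Apos: "0 < A"
    proof -
      have "0 \<le> A" unfolding A_def by (rule integral_nonneg[OF inth]) (auto simp: h0)
      moreover have "A \<noteq> 0"
      proof
        assume "A = 0"
        hence "\<forall>t\<in>{0..1}. h t = 0" using integral_eq_0_iff[OF ch] h0 unfolding A_def by auto
        moreover have "h (s + \<delta>/2) \<noteq> 0" using dpos unfolding h_def by auto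
        ultimately show False using s d2 dpos by auto
      qed
      ultimately show ?thesis by simp
    qed
    have M01: "0 \<le> M" "M \<le> 1"
    proof -
      show "0 \<le> M" unfolding M_def by (rule integral_nonneg[OF intwl]) (use wf lam01 in auto)
      have "M \<le> integral {0..1} w" unfolding M_def
        by (rule integral_le[OF intwl intw]) (use wf lam01 in \<open>auto intro!: mult_left_le\<close>)
      thus "M \<le> 1" using wf by simp
    qed
    have betapos: "0 \<le> \<beta>" unfolding \<beta>_def using M01 Apos by simp
    define a where "a = s + 2*\<delta>"
    have Mle: "M \<le> integral {0..s} w + e/4"
    proof -
      have a01: "0 \<le> a" "a \<le> 1" using s dpos d2 unfolding a_def by auto
      have "M = integral {0..a} (\<lambda>t. w t * lam t) + integral {a..1} (\<lambda>t. w t * lam t)"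
        unfolding M_def using Henstock_Kurzweil_Integration.integral_combine[OF a01 intwl[of 0 1, simplified]] by simp
      moreover have "integral {a..1} (\<lambda>t. w t * lam t) = integral {a..1} (\<lambda>t. 0)"
        by (rule integral_cong) (auto simp: lam0 a_def)
      moreover have "integral {0..a} (\<lambda>t. w t * lam t) \<le> integral {0..a} w"
      proof (rule integral_le[OF intwl intw])
        fix t assume "t \<in> {0..a}"
        hence "t \<in> {0..1}" using a01 by auto
        thus "w t * lam t \<le> w t" using wf lam01 by (auto intro!: mult_left_le)
      qed (use a01 in auto)
      moreover have "integral {0..s} w + integral {s..a} w = integral {0..a} w"
        using Henstock_Kurzweil_Integration.integral_combine[OF s(1) _ intw[of 0 a]] a01 dpos unfolding a_def by auto
      moreover have "integral {s..a} w \<le> integral {s..a} (\<lambda>t. B)"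
      proof (rule integral_le[OF intw])
        fix t assume "t \<in> {s..a}"
        hence "t \<in> {0..1}" using s a01 by auto
        thus "w t \<le> B" using B by (metis abs_ge_self order_trans)
      qed (use s a01 in auto)
      moreover have "integral {s..a} (\<lambda>t. B) = 2*B*\<delta>" using dpos unfolding a_def by simp
      moreover have "integral {a..1} (\<lambda>t. 0::real) = 0" by simp
      ultimately show ?thesis using d2 by (smt (verit))
    qed
    have vty: "buyer_type 1 v"
      unfolding buyer_type_def
    proof (intro conjI)
      have Ll: "(1/\<delta>)-lipschitz_on {0..1} lam"
      proof (rule lipschitz_onI)
        fix x y :: real
        have "\<bar>max 0 (min 1 ((s + 2*\<delta> - x)/\<delta>)) - max 0 (min 1 ((s + 2*\<delta> - y)/\<delta>))\<bar>
              \<le> \<bar>(s + 2*\<delta> - x)/\<delta> - (s + 2*\<delta> - y)/\<delta>\<bar>"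
          by (auto simp: max_def min_def abs_if)
        also have "\<dots> = \<bar>(y - x)/\<delta>\<bar>" by (simp add: diff_divide_distrib[symmetric])
        also have "\<dots> = (1/\<delta>) * \<bar>x - y\<bar>" using dpos by (simp add: abs_minus_commute)
        finally show "dist (lam x) (lam y) \<le> (1/\<delta>) * dist x y" unfolding lam_def dist_real_def .
      qed (use dpos in simp)
      have Lh: "1-lipschitz_on {0..1} h"
      proof (rule lipschitz_onI)
        fix x y :: real
        have "\<bar>max 0 (\<delta>/2 - \<bar>x - (s + \<delta>/2)\<bar>) - max 0 (\<delta>/2 - \<bar>y - (s + \<delta>/2)\<bar>)\<bar> \<le> \<bar>x - y\<bar>"
          by (auto simp: max_def abs_if)
        thus "dist (h x) (h y) \<le> 1 * dist x y" unfolding h_def dist_real_def by simp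
      qed simp
      have "(B*(1/\<delta>) + 1*L)-lipschitz_on {0..1} (\<lambda>t. w t * lam t)"
        by (rule lip_mult[OF L Ll]) (use B lam01 in auto)
      hence "(B*(1/\<delta>) + 1*L + \<bar>\<beta>\<bar> * 1)-lipschitz_on {0..1} v"
        unfolding v_def by (intro lipschitz_on_add lipschitz_on_cmult_real Lh)
      thus "\<exists>L. L-lipschitz_on {0..1} v" by blast
      show "\<forall>t\<in>{0..1}. 0 \<le> v t" unfolding v_def using wf lam01 h0 betapos by auto
      have "integral {0..1} v = M + \<beta> * A"
        unfolding v_def M_def A_def
        using integral_add[OF intwl[of 0 1] integrable_cmul[OF inth[of 0 1], of \<beta>]] by simp
      also have "\<dots> = 1" using Apos unfolding \<beta>_def by simp
      finally show "integral {0..1} v = 1" .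
    qed
    define \<tau> where "\<tau> = s + \<delta>"
    have tau: "\<tau> \<in> {0..1}" using s dpos d2 unfolding \<tau>_def by auto
    have veq: "v t = w t + \<beta> * h t" if "t \<le> \<tau>" for t using lam1[of t] that unfolding v_def \<tau>_def by simp
    have pw: "\<beta> * (r w s - e/2) * h t \<le> r w t * v t - x w t" if "t \<in> {0..\<tau>}" for t
    proof -
      have t1: "t \<in> {0..1}" using that tau by auto
      have "r w t * v t - x w t = (r w t * w t - x w t) + \<beta> * (r w t * h t)"
        using veq[of t] that by (simp add: algebra_simps)
      moreover have "0 \<le> r w t * w t - x w t" using IR t1 by auto
      moreover have "(r w s - e/2) * h t \<le> r w t * h t"
      proof (cases "h t = 0")
        case False
        hence "s < t \<and> t < s + \<delta>" by (rule hpos)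
        hence "dist t s < d1" using d2 by (auto simp: dist_real_def)
        hence "dist (r w t) (r w s) < e/2" using d1 t1 by auto
        hence "\<bar>r w t - r w s\<bar> < e/2" by (simp add: dist_real_def)
        hence "r w s - e/2 \<le> r w t" by (smt (verit))
        thus ?thesis using h0[of t] by (rule mult_right_mono)
      qed simp
      ultimately show ?thesis using betapos
        by (smt (verit) mult.assoc mult_left_mono)
    qed
    have crwv: "continuous_on {0..\<tau>} (\<lambda>t. r w t * v t - x w t)"
    proof -
      have cv: "continuous_on {0..1} v" unfolding v_def using wf(1) clam ch by (intro continuous_intros)
      show ?thesis using tau by (intro continuous_intros continuous_on_subset[OF mw(1)] continuous_on_subset[OF mw(3)]
            continuous_on_subset[OF cv]) auto
    qed
    have intA: "integral {0..\<tau>} h = A"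
    proof -
      have "integral {0..\<tau>} h + integral {\<tau>..1} h = A"
        unfolding A_def using Henstock_Kurzweil_Integration.integral_combine[of 0 \<tau> 1 h] tau inth[of 0 1] by auto
      moreover have "integral {\<tau>..1} h = integral {\<tau>..1} (\<lambda>t. 0)"
        by (rule integral_cong) (use hpos \<tau>_def in force)
      ultimately show ?thesis by simp
    qed
    have gain: "\<beta> * (r w s - e/2) * A \<le> integral {0..\<tau>} (\<lambda>t. r w t * v t - x w t)"
    proof -
      have "integral {0..\<tau>} (\<lambda>t. \<beta> * (r w s - e/2) * h t) \<le> integral {0..\<tau>} (\<lambda>t. r w t * v t - x w t)"
      proof (rule integral_le[OF _ integrable_continuous_real[OF crwv]])
        show "(\<lambda>t. \<beta> * (r w s - e/2) * h t) integrable_on {0..\<tau>}"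
          using tau by (intro integrable_continuous_real continuous_intros continuous_on_subset[OF ch]) auto
      qed (use pw in auto)
      thus ?thesis using intA by simp
    qed
    have dev: "integral {0..\<tau>} (\<lambda>t. r w t * v t - x w t) \<le> integral {0..1} (\<lambda>t. r v t * v t - x v t)"
    proof -
      have "\<forall>t\<in>{0..\<tau>}. r w t * v t - x w t \<ge> 0"
      proof
        fix t assume t: "t \<in> {0..\<tau>}"
        have "0 \<le> \<beta> * (r w s - e/2) * h t" using betapos False h0[of t] by simp
        thus "r w t * v t - x w t \<ge> 0" using pw[OF t] by linarith
      qed
      thus ?thesis using tr vty w tau unfolding truthful_def by blast
    qed
    have "\<beta> * (r w s - e/2) * A = (1 - M) * (r w s - e/2)" unfolding \<beta>_def using Apos by simp
    moreover have "(1 - M) * (r w s - e/2) \<ge> (1 - integral {0..s} w - e/4) * (r w s - e/2)"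
      using Mle False by (intro mult_right_mono) auto
    moreover have "(1 - integral {0..s} w - e/4) * (r w s - e/2) \<ge> r w s * (1 - integral {0..s} w) - e"
      using arith1[of "1 - integral {0..s} w" "r w s" e] F0 F1 rs e by simp
    ultimately have "r w s * (1 - integral {0..s} w) - e \<le> integral {0..1} (\<lambda>t. r v t * v t - x v t)"
      using gain dev by linarith
    thus ?thesis using vty by blast
  qed
qed


theorem theorem8:
  fixes r x :: "(real \<Rightarrow> real) \<Rightarrow> real \<Rightarrow> real"
  assumes "mechanism 1 r x"
    and "truthful 1 r x"
  shows "(INF v\<in>{v. buyer_type 1 v}. revenue x v) \<le> exp (-1)"
proof (rule ccontr)
  assume neg: "\<not> ?thesis"
  define c where "c = (INF v\<in>{v. buyer_type 1 v}. revenue x v)"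
  have cgt: "exp (-1) < c" using neg unfolding c_def by simp
  have one: "buyer_type 1 (\<lambda>_. 1)" unfolding buyer_type_def using lipschitz_on_constant by auto
  have mv: "continuous_on {0..1} (r v) \<and> (\<forall>t\<in>{0..1}. 0 \<le> r v t \<and> r v t \<le> 1) \<and>
        continuous_on {0..1} (x v) \<and> (\<forall>t\<in>{0..1}. 0 \<le> x v t)" if "buyer_type 1 v" for v
    using assms(1) that unfolding mechanism_def by blast
  have revnn: "0 \<le> revenue x v" if "buyer_type 1 v" for v
    unfolding revenue_def using mv[OF that]
    by (auto intro!: integral_nonneg integrable_continuous_real)
  have bdd: "bdd_below ((\<lambda>v. revenue x v) ` {v. buyer_type 1 v})"
    by (rule bdd_belowI[of _ 0]) (auto intro: revnn)
  have cle: "c \<le> revenue x v" if "buyer_type 1 v" for v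
    unfolding c_def by (rule cINF_lower[OF bdd]) (use that in auto)
  define d where "d = c - exp (-1)"
  have dpos: "0 < d" using cgt d_def by simp
  define P where "P K \<longleftrightarrow> (\<forall>w s. buyer_type 1 w \<longrightarrow> s \<in> {0..1} \<longrightarrow> r w s * (1 - integral {0..s} w) \<le> K)" for K
  have Fb: "0 \<le> integral {0..s} w \<and> integral {0..s} w \<le> 1" if w: "buyer_type 1 w" and s: "s \<in> {0..1}" for w s
  proof -
    note wf = bt_facts[OF w]
    have intw: "w integrable_on {a..b}" if "0 \<le> a" "b \<le> 1" for a b
      by (intro integrable_continuous_real continuous_on_subset[OF wf(1)]) (use that in auto)
    have "0 \<le> integral {0..s} w" by (rule integral_nonneg[OF intw]) (use s wf in auto)
    moreover have "integral {0..s} w \<le> 1"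
      using integral_subset_le[of "{0..s}" "{0..1}" w] intw[of 0 s] intw[of 0 1] s wf by auto
    ultimately show ?thesis by simp
  qed
  have P1: "P 1" unfolding P_def
  proof (intro allI impI)
    fix w and s :: real assume w: "buyer_type 1 w" and s: "s \<in> {0..1}"
    have "0 \<le> r w s" "r w s \<le> 1" using mv[OF w] s by auto
    moreover have "0 \<le> 1 - integral {0..s} w" "1 - integral {0..s} w \<le> 1" using Fb[OF w s] by auto
    ultimately show "r w s * (1 - integral {0..s} w) \<le> 1" by (simp add: mult_le_one)
  qed
  have Ub: "integral {0..1} (\<lambda>t. r v t * v t - x v t) \<le> K - d"
    if PK: "P K" and K: "0 < K" "K \<le> 1" and v: "buyer_type 1 v" for K v
  proof -
    note vf = bt_facts[OF v]
    have alloc: "integral {0..1} (\<lambda>t. r v t * v t) \<le> K * ln (1/K) + K"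
      by (rule alloc_bound[OF vf(1,2)]) (use vf(3) mv[OF v] K PK v in \<open>auto simp: P_def\<close>)
    have i1: "(\<lambda>t. r v t * v t) integrable_on {0..1}"
      using mv[OF v] vf(1) by (intro integrable_continuous_real continuous_intros) auto
    have i2: "x v integrable_on {0..1}"
      using mv[OF v] by (intro integrable_continuous_real) auto
    have "integral {0..1} (\<lambda>t. r v t * v t - x v t) = integral {0..1} (\<lambda>t. r v t * v t) - revenue x v"
      unfolding revenue_def using integral_diff[OF i1 i2] by simp
    moreover have "K * ln (1/K) \<le> exp (-1)" by (rule lnb[OF K(1)])
    moreover have "c \<le> revenue x v" by (rule cle[OF v])
    ultimately show ?thesis using alloc d_def by linarith
  qed
  have step: "P (K - d/2) \<and> 0 < K - d/2 \<and> K - d/2 \<le> 1" if PK: "P K" and K: "0 < K" "K \<le> 1" for K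
  proof -
    have Knn: "0 \<le> K - d" using Ub[OF PK K one] util_nonneg[OF assms one] by linarith
    have "P (K - d)"
      unfolding P_def
    proof (intro allI impI)
      fix w and s :: real assume w: "buyer_type 1 w" and s: "s \<in> {0..1}"
      show "r w s * (1 - integral {0..s} w) \<le> K - d"
      proof (cases "s = 1")
        case True
        thus ?thesis using bt_facts(3)[OF w] Knn by simp
      next
        case False
        hence s': "0 \<le> s" "s < 1" using s by auto
        show ?thesis
        proof (rule field_le_epsilon)
          fix e :: real assume e: "0 < e"
          obtain v where v: "buyer_type 1 v"
            and dv: "r w s * (1 - integral {0..s} w) - e \<le> integral {0..1} (\<lambda>t. r v t * v t - x v t)"
            using deviation[OF assms w s' e] by blast
          show "r w s * (1 - integral {0..s} w) \<le> K - d + e" using dv Ub[OF PK K v] by linarith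
        qed
      qed
    qed
    moreover have "K - d \<le> K - d/2" using dpos by simp
    ultimately have "P (K - d/2)" unfolding P_def by (meson order_trans)
    moreover have "0 < K - d/2" using Knn dpos by simp
    moreover have "K - d/2 \<le> 1" using K dpos by simp
    ultimately show ?thesis by simp
  qed
  have all: "P (1 - real n * d/2) \<and> 0 < 1 - real n * d/2 \<and> 1 - real n * d/2 \<le> 1" for n :: nat
  proof (induction n)
    case 0
    then show ?case using P1 by simp
  next
    case (Suc n)
    have eq: "1 - real (Suc n) * d/2 = (1 - real n * d/2) - d/2" by (simp add: field_simps)
    show ?case unfolding eq using step Suc.IH by blast
  qed
  obtain n :: nat where n: "2/d < real n" using reals_Archimedean2 by blast
  hence "1 < real n * d/2" using dpos by (simp add: field_simps)
  moreover have "0 < 1 - real n * d/2" using all[of n] by blast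
  ultimately show False by simp
qed

end
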